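(* Let $l\in\mathbb N$, $0\le\rho,\delta\le1$, $m\in\mathbb R$, $\tilde m\in\mathbb N_0$, $0<\tau<1$, $M\in\mathbb N_0\cup\{\infty\}$ with $M\ge n+4$, and $a\in C^{\tilde m,\tau}S^m_{\rho,\delta}(\mathbb R^n\times\mathbb R^n;M;\mathscr L(\mathbb C^l))$. Assume that for every $\alpha$ with $|\alpha|\le n+3$ and every $\xi$ the limit $\lim_{|x|\to\infty}\partial_\xi^\alpha a(x,\xi)=\partial_\xi^\alpha a(\infty,\xi)$ exists, where $a(\infty,\xi):=\lim_{|x|\to\infty}a(x,\xi)$, and that $$\sup_{\xi\in\mathbb R^n}\|a(x,\xi)-a(\infty,\xi)\|_{\mathscr L(\mathbb C^l)}\langle\xi\rangle^{-m}\to0\quad(|x|\to\infty).$$ Then for every $\alpha$ with $|\alpha|\le n+2$, $\|\partial_\xi^\alpha a(x,\xi)-\partial_\xi^\alpha a(\infty,\xi)\|_{\mathscr L(\mathbb C^l)}\langle\xi\rangle^{-m+\rho|\alpha|}\to0$ as $|x|\to\infty$, uniformly in $\xi\in\mathbb R^n$.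
   Context: $\langle\xi\rangle=(1+|\xi|^2)^{1/2}$, $\mathscr L(\mathbb C^l)\cong\mathbb C^{l\times l}$. Hölder norm $\|f\|_{C^{\tilde m,\tau}}=\max_{|\beta|\le\tilde m}\big(\sup|\partial^\beta f|+\sup_{x\ne y}|\partial^\beta f(x)-\partial^\beta f(y)|/|x-y|^\tau\big)$. $C^{\tilde m,\tau}S^m_{\rho,\delta}(\mathbb R^n\times\mathbb R^n;M;\mathscr L(\mathbb C^l))$: $a:\mathbb R^{2n}\to\mathbb C^{l\times l}$ with, for $|\beta|\le\tilde m$, $|\alpha|\le M$: $\partial_x^\beta a(x,\cdot)\in C^M$; $\partial_x^\beta\partial_\xi^\alpha a$ continuous; $\|\partial_\xi^\alpha a(x,\xi)\|\le C_\alpha\langle\xi\rangle^{m-\rho|\alpha|}$; $\|\partial_\xi^\alpha a(\cdot,\xi)\|_{C^{\tilde m,\tau}}\le C_\alpha\langle\xi\rangle^{m-\rho|\alpha|+\delta(\tilde m+\tau)}$. *)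

theory Defs
  imports "HOL-Analysis.Analysis" "HOL-Library.Extended_Nat" "HOL-Library.Extended_Real"
begin

definition has_partial :: "'n::finite \<Rightarrow> (real^'n \<Rightarrow> 'b::real_normed_vector) \<Rightarrow> real^'n \<Rightarrow> bool" where
  "has_partial i f x \<longleftrightarrow> (\<lambda>t. f (x + t *\<^sub>R axis i 1)) differentiable (at 0)"

definition partial :: "'n::finite \<Rightarrow> (real^'n \<Rightarrow> 'b::real_normed_vector) \<Rightarrow> real^'n \<Rightarrow> 'b" where
  "partial i f x = vector_derivative (\<lambda>t. f (x + t *\<^sub>R axis i 1)) (at 0)"

text \<open>Iterated partial derivative along a list of directions; a multi-index alpha
  corresponds to any list with count i = alpha i, and |alpha| = length.\<close>

primrec pderivs :: "'n::finite list \<Rightarrow> (real^'n \<Rightarrow> 'b::real_normed_vector) \<Rightarrow> real^'n \<Rightarrow> 'b" where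
  "pderivs [] f = f"
| "pderivs (i # is) f = partial i (pderivs is f)"

definition Ck :: "enat \<Rightarrow> (real^'n::finite \<Rightarrow> 'b::real_normed_vector) \<Rightarrow> bool" where
  "Ck k f \<longleftrightarrow>
     (\<forall>ds. enat (length ds) < k \<longrightarrow> (\<forall>i x. has_partial i (pderivs ds f) x)) \<and>
     (\<forall>ds. enat (length ds) \<le> k \<longrightarrow> continuous_on UNIV (pderivs ds f))"

definition jb :: "real^'n::finite \<Rightarrow> real" where
  "jb \<xi> = sqrt (1 + (norm \<xi>)\<^sup>2)"

text \<open>Operator norm on L(C^l) = l x l complex matrices acting on C^l.\<close>
definition opnorm :: "complex^'l::finite^'l \<Rightarrow> real" where
  "opnorm A = onorm (\<lambda>v::complex^'l. A *v v)"

text \<open>Hoelder norm C^{mt,tau} of a matrix-valued function (extended-real valued,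
  so that it may be infinite).\<close>
definition holder_norm :: "nat \<Rightarrow> real \<Rightarrow> (real^'n::finite \<Rightarrow> complex^'l::finite^'l) \<Rightarrow> ereal" where
  "holder_norm mt \<tau> f =
     (SUP ds \<in> {ds::'n list. length ds \<le> mt}.
        (SUP x. ereal (opnorm (pderivs ds f x))) +
        (SUP p \<in> {(x, y). x \<noteq> y}.
           ereal (opnorm (pderivs ds f (fst p) - pderivs ds f (snd p)) / norm (fst p - snd p) powr \<tau>)))"

text \<open>The symbol class C^{mt,tau} S^m_{rho,delta}(R^n x R^n; M; L(C^l)).
  a x xi is the symbol; derivatives in xi are taken of a x, derivatives in x of
  (\<lambda>y. ... y ...).\<close>
definition symbol_class ::
  "nat \<Rightarrow> real \<Rightarrow> real \<Rightarrow> real \<Rightarrow> real \<Rightarrow> enat \<Rightarrow>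
   (real^'n::finite \<Rightarrow> real^'n \<Rightarrow> complex^'l::finite^'l) \<Rightarrow> bool" where
  "symbol_class mt \<tau> m \<rho> \<delta> M a \<longleftrightarrow>
     (\<forall>bs. length bs \<le> mt \<longrightarrow> (\<forall>x. Ck M (\<lambda>\<xi>. pderivs bs (\<lambda>y. a y \<xi>) x))) \<and>
     (\<forall>bs as. length bs \<le> mt \<longrightarrow> enat (length as) \<le> M \<longrightarrow>
        continuous_on UNIV (\<lambda>(x, \<xi>). pderivs bs (\<lambda>y. pderivs as (a y) \<xi>) x)) \<and>
     (\<forall>as. enat (length as) \<le> M \<longrightarrow>
        (\<forall>bs i \<xi> x. length bs < mt \<longrightarrow>
            has_partial i (pderivs bs (\<lambda>y. pderivs as (a y) \<xi>)) x) \<and>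
        (\<exists>C. (\<forall>x \<xi>. opnorm (pderivs as (a x) \<xi>) \<le> C * jb \<xi> powr (m - \<rho> * real (length as))) \<and>
             (\<forall>\<xi>. holder_norm mt \<tau> (\<lambda>x. pderivs as (a x) \<xi>)
                    \<le> ereal (C * jb \<xi> powr (m - \<rho> * real (length as) + \<delta> * (real mt + \<tau>))))))"

end

theory Submission imports Defs begin

lemma interp:
  fixes g g' g'' :: "real \<Rightarrow> 'v::real_normed_vector"
  assumes h: "h > 0"
    and d1: "\<And>t. t \<in> {0..h} \<Longrightarrow> (g has_vector_derivative g' t) (at t)"
    and d2: "\<And>t. t \<in> {0..h} \<Longrightarrow> (g' has_vector_derivative g'' t) (at t)"
    and bd: "\<And>t. t \<in> {0..h} \<Longrightarrow> norm (g'' t) \<le> B"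
  shows "h * norm (g' 0) \<le> norm (g h) + norm (g 0) + h * h * B"
proof -
  have B0: "0 \<le> B" using bd[of 0] h by (smt (verit) atLeastAtMost_iff norm_ge_zero)
  have s1: "norm (g' t - g' 0) \<le> B * h" if t: "t \<in> {0..h}" for t
  proof -
    have "norm (g' t - g' 0) \<le> B * norm (t - 0)"
    proof (rule differentiable_bound[where S="{0..h}" and f'="\<lambda>x u. u *\<^sub>R g'' x"])
      show "convex {0..h}" by simp
      show "(g' has_derivative (\<lambda>u. u *\<^sub>R g'' x)) (at x within {0..h})" if "x \<in> {0..h}" for x
        using d2[OF that] has_vector_derivative_at_within has_vector_derivative_def by blast
      show "onorm (\<lambda>u. u *\<^sub>R g'' x) \<le> B" if "x \<in> {0..h}" for x
        using bd[OF that] by (simp add: onorm_scaleR_left onorm_id)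
    qed (use t h in auto)
    also have "\<dots> \<le> B * h" using t B0 by (intro mult_left_mono) auto
    finally show ?thesis .
  qed
  define \<phi> where "\<phi> t = g t - t *\<^sub>R g' 0" for t
  have "norm (\<phi> h - \<phi> 0) \<le> (B * h) * norm (h - 0)"
  proof (rule differentiable_bound[where S="{0..h}" and f'="\<lambda>x u. u *\<^sub>R (g' x - g' 0)"])
    show "convex {0..h}" by simp
    show "(\<phi> has_derivative (\<lambda>u. u *\<^sub>R (g' x - g' 0))) (at x within {0..h})" if "x \<in> {0..h}" for x
    proof -
      have l: "((\<lambda>t. t *\<^sub>R g' 0) has_vector_derivative g' 0) (at x)"
        using bounded_linear.has_vector_derivative[OF bounded_linear_scaleR_left has_vector_derivative_id, of "g' 0" "at x"]
        by simp
      have "(\<phi> has_vector_derivative (g' x - g' 0)) (at x)"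
        unfolding \<phi>_def
        by (intro has_vector_derivative_diff l d1[OF that])
      then show ?thesis
        using has_vector_derivative_at_within has_vector_derivative_def by fastforce
    qed
    show "onorm (\<lambda>u. u *\<^sub>R (g' x - g' 0)) \<le> B * h" if "x \<in> {0..h}" for x
      using s1[OF that] by (simp add: onorm_scaleR_left onorm_id)
  qed (use h in auto)
  moreover have "\<phi> h - \<phi> 0 = g h - g 0 - h *\<^sub>R g' 0" by (simp add: \<phi>_def)
  moreover have "h * norm (g' 0) = norm (h *\<^sub>R g' 0)" using h by simp
  moreover have "norm (h *\<^sub>R g' 0) \<le> norm (g h) + norm (g 0) + norm (g h - g 0 - h *\<^sub>R g' 0)"
  proof -
    have e: "h *\<^sub>R g' 0 = (g h - g 0) - (g h - g 0 - h *\<^sub>R g' 0)" by simp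
    have "norm ((g h - g 0) - (g h - g 0 - h *\<^sub>R g' 0)) \<le> norm (g h - g 0) + norm (g h - g 0 - h *\<^sub>R g' 0)"
      by (rule norm_triangle_ineq4)
    moreover have "norm (g h - g 0) \<le> norm (g h) + norm (g 0)" by (rule norm_triangle_ineq4)
    ultimately show ?thesis by (subst e) linarith
  qed
  ultimately show ?thesis using h by (simp add: mult.commute mult.left_commute)
qed

lemma jb_ge1: "1 \<le> jb \<xi>"
  unfolding jb_def by simp

lemma jb_cmod: "jb \<xi> = cmod (Complex 1 (norm \<xi>))"
  unfolding jb_def by (simp add: complex_norm)

lemma jb_lip: "\<bar>jb a - jb b\<bar> \<le> norm (a - b)"
proof -
  have "\<bar>jb a - jb b\<bar> \<le> cmod (Complex 1 (norm a) - Complex 1 (norm b))"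
    unfolding jb_cmod by (rule norm_triangle_ineq3)
  also have "\<dots> = \<bar>norm a - norm b\<bar>"
  proof -
    have "Complex 1 (norm a) - Complex 1 (norm b) = Complex 0 (norm a - norm b)"
      by (simp add: complex_eq_iff)
    then show ?thesis by (simp add: complex_norm)
  qed
  also have "\<dots> \<le> norm (a - b)" by (rule norm_triangle_ineq3)
  finally show ?thesis .
qed

lemma weight_cmp:
  fixes w v s :: real
  assumes "1 \<le> w" "\<bar>v - w\<bar> \<le> w / 2"
  shows "v powr s \<le> 2 powr \<bar>s\<bar> * w powr s"
proof (cases "s \<ge> 0")
  case True
  have "v powr s \<le> (2 * w) powr s" using assms True by (intro powr_mono2) (auto simp: abs_if split: if_splits)
  also have "\<dots> = 2 powr \<bar>s\<bar> * w powr s" using True by (simp add: powr_mult)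
  finally show ?thesis .
next
  case False
  have "v powr s \<le> (w / 2) powr s" using assms False by (intro powr_mono2') (auto simp: abs_if split: if_splits)
  also have "\<dots> = 2 powr \<bar>s\<bar> * w powr s" using False assms
    by (simp add: powr_divide powr_minus_divide divide_simps)
  finally show ?thesis .
qed

lemma line_deriv:
  assumes "has_partial i F (\<xi> + t *\<^sub>R axis i 1)"
  shows "((\<lambda>t. F (\<xi> + t *\<^sub>R axis i 1)) has_vector_derivative partial i F (\<xi> + t *\<^sub>R axis i 1)) (at t)"
proof -
  let ?G = "\<lambda>s. F (\<xi> + t *\<^sub>R axis i 1 + s *\<^sub>R axis i 1)"
  have "(?G has_vector_derivative partial i F (\<xi> + t *\<^sub>R axis i 1)) (at 0)"
    using assms unfolding has_partial_def partial_def
    by (simp add: vector_derivative_works)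
  moreover have "((\<lambda>u. u - t) has_vector_derivative 1) (at t)"
    by (intro derivative_eq_intros) auto
  ultimately have "((?G \<circ> (\<lambda>u. u - t)) has_vector_derivative 1 *\<^sub>R partial i F (\<xi> + t *\<^sub>R axis i 1)) (at t)"
    by (intro vector_diff_chain_at) auto
  moreover have "(?G \<circ> (\<lambda>u. u - t)) = (\<lambda>t. F (\<xi> + t *\<^sub>R axis i 1))"
    by (auto simp: o_def algebra_simps)
  ultimately show ?thesis by simp
qed

lemma bl_mv: "bounded_linear (\<lambda>M::complex^'l::finite^'k::finite. M *v v)"
proof -
  have "linear (\<lambda>M::complex^'l^'k. M *v v)"
  proof (rule linearI)
    show "(b + c) *v v = b *v v + c *v v" for b c :: "complex^'l^'k"
      by (simp add: matrix_vector_mult_add_rdistrib)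
    show "(r *\<^sub>R b) *v v = r *\<^sub>R (b *v v)" for r and b :: "complex^'l^'k"
      by (simp add: vec_eq_iff matrix_vector_mult_def scaleR_sum_right mult_scaleR_left)
  qed
  then show ?thesis by (simp add: linear_conv_bounded_linear)
qed

lemma opnorm_apply: "norm (A *v v) \<le> opnorm A * norm v"
  unfolding opnorm_def by (rule onorm[OF matrix_vector_mul_bounded_linear])

lemma opnorm_nonneg: "0 \<le> opnorm A"
  unfolding opnorm_def by (rule onorm_pos_le[OF matrix_vector_mul_bounded_linear])

lemma opnorm_le: "0 \<le> b \<Longrightarrow> (\<And>v. norm (A *v v) \<le> b * norm v) \<Longrightarrow> opnorm A \<le> b"
  unfolding opnorm_def by (rule onorm_bound)

lemma powr_move:
  fixes X y d s :: real
  assumes "0 < y" "X * y powr (-s) \<le> d"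
  shows "X \<le> d * y powr s"
proof -
  have "X = X * y powr (-s) * y powr s" using assms(1) by (simp add: mult.assoc powr_add[symmetric])
  also have "\<dots> \<le> d * y powr s" using assms by (intro mult_right_mono) auto
  finally show ?thesis .
qed

lemma step_lemma:
  fixes A Ad Add :: "'x \<Rightarrow> real^'n::finite \<Rightarrow> complex^'l::finite^'l"
  assumes rho: "0 \<le> \<rho>" "\<rho> \<le> 1" and C0: "0 \<le> C"
    and P: "\<And>\<epsilon>. \<epsilon> > 0 \<Longrightarrow> \<forall>\<^sub>F x in F. \<forall>\<eta>. opnorm (A x \<eta>) * jb \<eta> powr (- s0) \<le> \<epsilon>"
    and d1: "\<And>x \<eta> t. ((\<lambda>t. A x (\<eta> + t *\<^sub>R axis i 1)) has_vector_derivative Ad x (\<eta> + t *\<^sub>R axis i 1)) (at t)"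
    and d2: "\<And>x \<eta> t. ((\<lambda>t. Ad x (\<eta> + t *\<^sub>R axis i 1)) has_vector_derivative Add x (\<eta> + t *\<^sub>R axis i 1)) (at t)"
    and b2: "\<And>x \<eta>. opnorm (Add x \<eta>) \<le> C * jb \<eta> powr (s0 - 2 * \<rho>)"
    and eps: "\<epsilon> > 0"
  shows "\<forall>\<^sub>F x in F. \<forall>\<eta>. opnorm (Ad x \<eta>) * jb \<eta> powr (- (s0 - \<rho>)) \<le> \<epsilon>"
proof -
  define c1 where "c1 = 2 powr \<bar>s0\<bar>"
  define c2 where "c2 = 2 powr \<bar>s0 - 2 * \<rho>\<bar>"
  define K where "K = 4 * c1 + C * c2"
  have K0: "0 \<le> K" unfolding K_def c1_def c2_def using C0 by simp
  define \<delta> where "\<delta> = min 1 ((\<epsilon> / (K + 1))\<^sup>2)"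
  have \<delta>0: "0 < \<delta>" unfolding \<delta>_def using eps K0 by simp
  define sd where "sd = sqrt \<delta>"
  have sd0: "0 < sd" "sd \<le> 1" unfolding sd_def using \<delta>0 by (auto simp: \<delta>_def)
  have sdK: "sd * K \<le> \<epsilon>"
  proof -
    have "sd \<le> sqrt ((\<epsilon> / (K + 1))\<^sup>2)" unfolding sd_def \<delta>_def by (rule real_sqrt_le_mono) simp
    also have "\<dots> = \<epsilon> / (K + 1)" using eps K0 by simp
    finally have "sd \<le> \<epsilon> / (K + 1)" .
    then have "sd * K \<le> \<epsilon> / (K + 1) * K" using K0 by (intro mult_right_mono) auto
    also have "\<dots> \<le> \<epsilon>" using eps K0 by (simp add: field_simps)
    finally show ?thesis .
  qed
  have dsd: "\<delta> = sd * sd" unfolding sd_def using \<delta>0 by simp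
  show ?thesis
    using P[OF \<delta>0]
  proof eventually_elim
    case (elim x)
    show ?case
    proof
      fix \<xi> :: "real^'n"
      define w where "w = jb \<xi>"
      have w1: "1 \<le> w" unfolding w_def by (rule jb_ge1)
      define W where "W = w powr \<rho>"
      define Y where "Y = w powr (s0 - \<rho>)"
      have W0: "0 < W" "W \<le> w" unfolding W_def using w1 rho
        by (auto intro: order.trans[OF powr_mono[of \<rho> 1 w]])
      have Y0: "0 < Y" unfolding Y_def using w1 by simp
      have ws0: "w powr s0 = W * Y" unfolding W_def Y_def using w1 by (simp add: powr_add[symmetric])
      have ws2: "w powr (s0 - 2 * \<rho>) = Y / W" unfolding W_def Y_def using w1
        by (simp add: powr_diff[symmetric] algebra_simps)
      define h where "h = sd * W / 2"
      have h0: "0 < h" unfolding h_def using sd0 W0 by simp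
      have hw: "h \<le> w / 2" unfolding h_def using sd0 W0
        by (simp add: divide_right_mono mult_le_one order.trans[OF mult_right_mono[of sd 1 W]])
      have cmp: "\<bar>jb (\<xi> + t *\<^sub>R axis i 1) - w\<bar> \<le> w / 2" if "t \<in> {0..h}" for t
      proof -
        have "\<bar>jb (\<xi> + t *\<^sub>R axis i 1) - w\<bar> \<le> norm (\<xi> + t *\<^sub>R axis i 1 - \<xi>)"
          unfolding w_def by (rule jb_lip)
        also have "\<dots> = \<bar>t\<bar>" by simp
        finally show ?thesis using that hw by auto
      qed
      have mainv: "norm (Ad x \<xi> *v v) \<le> sd * K * Y * norm v" for v
      proof -
        let ?g = "\<lambda>t. A x (\<xi> + t *\<^sub>R axis i 1) *v v"
        let ?g1 = "\<lambda>t. Ad x (\<xi> + t *\<^sub>R axis i 1) *v v"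
        let ?g2 = "\<lambda>t. Add x (\<xi> + t *\<^sub>R axis i 1) *v v"
        have B: "norm (?g2 t) \<le> C * c2 * (Y / W) * norm v" if "t \<in> {0..h}" for t
        proof -
          have "norm (?g2 t) \<le> opnorm (Add x (\<xi> + t *\<^sub>R axis i 1)) * norm v" by (rule opnorm_apply)
          also have "\<dots> \<le> C * jb (\<xi> + t *\<^sub>R axis i 1) powr (s0 - 2 * \<rho>) * norm v"
            by (intro mult_right_mono b2) auto
          also have "\<dots> \<le> C * (c2 * w powr (s0 - 2 * \<rho>)) * norm v"
            unfolding c2_def using C0
            by (intro mult_right_mono mult_left_mono weight_cmp[OF w1 cmp[OF that]]) auto
          finally show ?thesis by (simp add: ws2 mult.assoc)
        qed
        have gA: "norm (?g t) \<le> \<delta> * (c1 * (W * Y)) * norm v" if "t \<in> {0..h}" for t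
        proof -
          have "norm (?g t) \<le> opnorm (A x (\<xi> + t *\<^sub>R axis i 1)) * norm v" by (rule opnorm_apply)
          also have "\<dots> \<le> \<delta> * jb (\<xi> + t *\<^sub>R axis i 1) powr s0 * norm v"
            by (intro mult_right_mono powr_move elim[rule_format]) (auto intro: order.strict_trans2[OF _ jb_ge1])
          also have "\<dots> \<le> \<delta> * (c1 * w powr s0) * norm v"
            unfolding c1_def using \<delta>0
            by (intro mult_right_mono mult_left_mono weight_cmp[OF w1 cmp[OF that]]) auto
          finally show ?thesis by (simp add: ws0)
        qed
        have c1p: "1 \<le> c1" unfolding c1_def by (rule ge_one_powr_ge_zero) auto
        have g0: "norm (?g 0) \<le> \<delta> * (c1 * (W * Y)) * norm v" using gA[of 0] h0 by simp
        have gh: "norm (?g h) \<le> \<delta> * (c1 * (W * Y)) * norm v" using gA[of h] h0 by simp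
        have "h * norm (?g1 0) \<le> norm (?g h) + norm (?g 0) + h * h * (C * c2 * (Y / W) * norm v)"
        proof (rule interp[OF h0])
          show "(?g has_vector_derivative ?g1 t) (at t)" for t
            by (rule bounded_linear.has_vector_derivative[OF bl_mv d1])
          show "(?g1 has_vector_derivative ?g2 t) (at t)" for t
            by (rule bounded_linear.has_vector_derivative[OF bl_mv d2])
        qed (rule B)
        also have "\<dots> \<le> 2 * (\<delta> * (c1 * (W * Y)) * norm v) + h * h * (C * c2 * (Y / W) * norm v)"
          using g0 gh by simp
        also have "\<dots> = h * (sd * (4 * c1 + C * c2 / 2) * Y * norm v)"
          unfolding h_def dsd using W0 by (simp add: field_simps)
        finally have "norm (?g1 0) \<le> sd * (4 * c1 + C * c2 / 2) * Y * norm v"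
          using h0 by (simp add: mult_le_cancel_left_pos)
        also have "\<dots> \<le> sd * K * Y * norm v"
        proof -
          have "4 * c1 + C * c2 / 2 \<le> K" unfolding K_def using C0 by (simp add: c2_def)
          then have "sd * (4 * c1 + C * c2 / 2) \<le> sd * K" using sd0 by (intro mult_left_mono) auto
          then show ?thesis using Y0 by (intro mult_right_mono) auto
        qed
        finally show ?thesis by simp
      qed
      have "opnorm (Ad x \<xi>) \<le> sd * K * Y"
        by (rule opnorm_le) (use mainv sd0 K0 Y0 in auto)
      then have "opnorm (Ad x \<xi>) * w powr (- (s0 - \<rho>)) \<le> sd * K * Y * w powr (- (s0 - \<rho>))"
        using w1 by (intro mult_right_mono) auto
      also have "\<dots> = sd * K" unfolding Y_def using w1 by (simp add: mult.assoc powr_add[symmetric])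
      also have "\<dots> \<le> \<epsilon>" by (rule sdK)
      finally show "opnorm (Ad x \<xi>) * jb \<xi> powr (- (s0 - \<rho>)) \<le> \<epsilon>" unfolding w_def .
    qed
  qed
qed

lemma opnorm_diff: "opnorm (X - Y) \<le> opnorm X + opnorm Y"
proof (rule opnorm_le)
  show "0 \<le> opnorm X + opnorm Y" using opnorm_nonneg[of X] opnorm_nonneg[of Y] by simp
  fix v
  have "norm ((X - Y) *v v) = norm (X *v v - Y *v v)" by (simp add: matrix_vector_mult_diff_rdistrib)
  also have "\<dots> \<le> norm (X *v v) + norm (Y *v v)" by (rule norm_triangle_ineq4)
  also have "\<dots> \<le> opnorm X * norm v + opnorm Y * norm v" by (intro add_mono opnorm_apply)
  finally show "norm ((X - Y) *v v) \<le> (opnorm X + opnorm Y) * norm v" by (simp add: algebra_simps)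
qed

theorem mainTheorem14:
  fixes a :: "real^'n::finite \<Rightarrow> real^'n \<Rightarrow> complex^'l::finite^'l"
    and a_inf :: "real^'n \<Rightarrow> complex^'l^'l"
    and \<rho> \<delta> m \<tau> :: real and mt :: nat and M :: enat
  assumes "0 \<le> \<rho>" "\<rho> \<le> 1" "0 \<le> \<delta>" "\<delta> \<le> 1" "0 < \<tau>" "\<tau> < 1"
    and "M \<ge> enat (CARD('n) + 4)"
    and "symbol_class mt \<tau> m \<rho> \<delta> M a"
    and "\<And>\<xi>. ((\<lambda>x. a x \<xi>) \<longlongrightarrow> a_inf \<xi>) at_infinity"
    and "\<And>as i \<xi>. length as < CARD('n) + 3 \<Longrightarrow> has_partial i (pderivs as a_inf) \<xi>"
    and "\<And>as \<xi>. length as \<le> CARD('n) + 3 \<Longrightarrow>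
           ((\<lambda>x. pderivs as (a x) \<xi>) \<longlongrightarrow> pderivs as a_inf \<xi>) at_infinity"
    and "\<And>\<epsilon>. \<epsilon> > 0 \<Longrightarrow> \<forall>\<^sub>F x in at_infinity.
           \<forall>\<xi>. opnorm (a x \<xi> - a_inf \<xi>) * jb \<xi> powr (- m) \<le> \<epsilon>"
  shows "\<forall>as. length as \<le> CARD('n) + 2 \<longrightarrow> (\<forall>\<epsilon>>0. \<forall>\<^sub>F x in at_infinity.
           \<forall>\<xi>. opnorm (pderivs as (a x) \<xi> - pderivs as a_inf \<xi>)
                  * jb \<xi> powr (- m + \<rho> * real (length as)) \<le> \<epsilon>)"
proof -
  note sc = assms(8)[unfolded symbol_class_def]
  have Mlt: "enat k < M" if "k < CARD('n) + 4" for k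
    using that assms(7) by (meson enat_ord_simps(2) order_less_le_trans)
  have Ckx: "Ck M (a x)" for x
    using sc by (auto dest!: conjunct1 spec[of _ "[]"])
  have hpx: "has_partial i (pderivs as (a x)) \<eta>" if "length as < CARD('n) + 4" for as i x \<eta>
    using Ckx[of x] Mlt[OF that] unfolding Ck_def by blast
  have bdx: "\<exists>C\<ge>0. \<forall>x \<eta>. opnorm (pderivs as (a x) \<eta>) \<le> C * jb \<eta> powr (m - \<rho> * real (length as))"
    if "length as < CARD('n) + 4" for as
  proof -
    from sc Mlt[OF that] obtain C where
      C: "\<forall>x \<eta>. opnorm (pderivs as (a x) \<eta>) \<le> C * jb \<eta> powr (m - \<rho> * real (length as))"
      by (meson order_less_imp_le)
    show ?thesis
    proof (intro exI[of _ "max C 0"] conjI allI)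
      fix x \<eta> :: "real^'n"
      have "C * jb \<eta> powr (m - \<rho> * real (length as)) \<le> max C 0 * jb \<eta> powr (m - \<rho> * real (length as))"
        by (intro mult_right_mono) auto
      then show "opnorm (pderivs as (a x) \<eta>) \<le> max C 0 * jb \<eta> powr (m - \<rho> * real (length as))"
        using C by (meson order.trans)
    qed simp
  qed
  have bdinf: "opnorm (pderivs as a_inf \<eta>) \<le> C * jb \<eta> powr (m - \<rho> * real (length as))"
    if "length as \<le> CARD('n) + 3" "0 \<le> C"
      "\<forall>x \<eta>. opnorm (pderivs as (a x) \<eta>) \<le> C * jb \<eta> powr (m - \<rho> * real (length as))" for as C \<eta>
  proof (rule opnorm_le)
    show "0 \<le> C * jb \<eta> powr (m - \<rho> * real (length as))" using that by simp
    fix v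
    have "((\<lambda>x. pderivs as (a x) \<eta> *v v) \<longlongrightarrow> pderivs as a_inf \<eta> *v v) at_infinity"
      by (rule bounded_linear.tendsto[OF bl_mv assms(11)[OF that(1)]])
    moreover have "\<forall>\<^sub>F x in at_infinity. norm (pderivs as (a x) \<eta> *v v) \<le> C * jb \<eta> powr (m - \<rho> * real (length as)) * norm v"
      using that(3) by (intro always_eventually allI order.trans[OF opnorm_apply] mult_right_mono) auto
    ultimately show "norm (pderivs as a_inf \<eta> *v v) \<le> C * jb \<eta> powr (m - \<rho> * real (length as)) * norm v"
      by (intro Lim_norm_ubound[OF trivial_limit_at_infinity])
  qed
  show ?thesis
  proof (intro allI)
    fix as :: "'n list"
    show "length as \<le> CARD('n) + 2 \<longrightarrow> (\<forall>\<epsilon>>0. \<forall>\<^sub>F x in at_infinity.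
           \<forall>\<xi>. opnorm (pderivs as (a x) \<xi> - pderivs as a_inf \<xi>)
                  * jb \<xi> powr (- m + \<rho> * real (length as)) \<le> \<epsilon>)"
    proof (induction as)
      case Nil
      show ?case using assms(12) by simp
    next
      case (Cons i \<alpha>)
      show ?case
      proof (intro impI allI)
        fix \<epsilon> :: real
        assume len: "length (i # \<alpha>) \<le> CARD('n) + 2" and eps: "\<epsilon> > 0"
        have IH: "\<forall>\<epsilon>>0. \<forall>\<^sub>F x in at_infinity. \<forall>\<xi>. opnorm (pderivs \<alpha> (a x) \<xi> - pderivs \<alpha> a_inf \<xi>)
                  * jb \<xi> powr (- m + \<rho> * real (length \<alpha>)) \<le> \<epsilon>"
          using Cons.IH len by simp
        define s0 where "s0 = m - \<rho> * real (length \<alpha>)"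
        have l2: "length (i # i # \<alpha>) < CARD('n) + 4" using len by simp
        obtain C where C0: "C \<ge> 0" and
          C: "\<forall>x \<eta>. opnorm (pderivs (i # i # \<alpha>) (a x) \<eta>) \<le> C * jb \<eta> powr (m - \<rho> * real (length (i # i # \<alpha>)))"
          using bdx[OF l2] by blast
        have Ci: "opnorm (pderivs (i # i # \<alpha>) a_inf \<eta>) \<le> C * jb \<eta> powr (m - \<rho> * real (length (i # i # \<alpha>)))" for \<eta>
          by (rule bdinf[OF _ C0 C]) (use len in simp)
        have ex: "m - \<rho> * real (length (i # i # \<alpha>)) = s0 - 2 * \<rho>" unfolding s0_def by (simp add: algebra_simps)
        have "\<forall>\<^sub>F x in at_infinity. \<forall>\<eta>. opnorm (pderivs (i # \<alpha>) (a x) \<eta> - pderivs (i # \<alpha>) a_inf \<eta>)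
                  * jb \<eta> powr (- (s0 - \<rho>)) \<le> \<epsilon>"
        proof (rule step_lemma[where A="\<lambda>x \<eta>. pderivs \<alpha> (a x) \<eta> - pderivs \<alpha> a_inf \<eta>"
                 and Add="\<lambda>x \<eta>. pderivs (i # i # \<alpha>) (a x) \<eta> - pderivs (i # i # \<alpha>) a_inf \<eta>"
                 and C="C + C" and i=i, OF assms(1,2) _ _ _ _ _ eps])
          show "0 \<le> C + C" using C0 by simp
          show "\<forall>\<^sub>F x in at_infinity. \<forall>\<eta>. opnorm (pderivs \<alpha> (a x) \<eta> - pderivs \<alpha> a_inf \<eta>) * jb \<eta> powr (- s0) \<le> e"
            if "e > 0" for e
            using IH that unfolding s0_def by (simp add: algebra_simps)
          show "((\<lambda>t. pderivs \<alpha> (a x) (\<eta> + t *\<^sub>R axis i 1) - pderivs \<alpha> a_inf (\<eta> + t *\<^sub>R axis i 1)) has_vector_derivative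
                 pderivs (i # \<alpha>) (a x) (\<eta> + t *\<^sub>R axis i 1) - pderivs (i # \<alpha>) a_inf (\<eta> + t *\<^sub>R axis i 1)) (at t)" for x \<eta> t
            unfolding pderivs.simps
            by (intro has_vector_derivative_diff line_deriv hpx assms(10)) (use len in simp_all)
          show "((\<lambda>t. pderivs (i # \<alpha>) (a x) (\<eta> + t *\<^sub>R axis i 1) - pderivs (i # \<alpha>) a_inf (\<eta> + t *\<^sub>R axis i 1)) has_vector_derivative
                 pderivs (i # i # \<alpha>) (a x) (\<eta> + t *\<^sub>R axis i 1) - pderivs (i # i # \<alpha>) a_inf (\<eta> + t *\<^sub>R axis i 1)) (at t)" for x \<eta> t
            unfolding pderivs.simps(2)[of i "i # \<alpha>"]
            by (intro has_vector_derivative_diff line_deriv hpx assms(10)) (use len in simp_all)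
          show "opnorm (pderivs (i # i # \<alpha>) (a x) \<eta> - pderivs (i # i # \<alpha>) a_inf \<eta>) \<le> (C + C) * jb \<eta> powr (s0 - 2 * \<rho>)" for x \<eta>
          proof -
            have a1: "opnorm (pderivs (i # i # \<alpha>) (a x) \<eta>) \<le> C * jb \<eta> powr (s0 - 2 * \<rho>)"
              using C ex by metis
            have a2: "opnorm (pderivs (i # i # \<alpha>) a_inf \<eta>) \<le> C * jb \<eta> powr (s0 - 2 * \<rho>)"
              using Ci[of \<eta>] ex by metis
            have e: "(C + C) * jb \<eta> powr (s0 - 2 * \<rho>) = C * jb \<eta> powr (s0 - 2 * \<rho>) + C * jb \<eta> powr (s0 - 2 * \<rho>)"
              by (simp add: distrib_right)
            show ?thesis
              using opnorm_diff[of "pderivs (i # i # \<alpha>) (a x) \<eta>" "pderivs (i # i # \<alpha>) a_inf \<eta>"] a1 a2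
              unfolding e by linarith
          qed
        qed
        moreover have "- (s0 - \<rho>) = - m + \<rho> * real (length (i # \<alpha>))" unfolding s0_def by (simp add: algebra_simps)
        ultimately show "\<forall>\<^sub>F x in at_infinity. \<forall>\<xi>. opnorm (pderivs (i # \<alpha>) (a x) \<xi> - pderivs (i # \<alpha>) a_inf \<xi>)
                  * jb \<xi> powr (- m + \<rho> * real (length (i # \<alpha>))) \<le> \<epsilon>" by simp
      qed
    qed
  qed
qed

end
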